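(* Let $\mathcal G=(\mathcal V,\mathcal E,W)$ be a network, $h\in\mathbb{R}^{\mathcal V}$, and consider the SNC game with binary actions on $\mathcal G$ with external field $h$. Then: (i) the game is super-modular if and only if $\mathcal G$ is unsigned; (ii) if $\mathcal G$ is unsigned, then the set $\mathcal N$ of Nash equilibria is globally BR-reachable.
   Context: A network is a triple $\mathcal G=(\mathcal V,\mathcal E,W)$ where $\mathcal V$ is a finite nonempty set, $\mathcal E\subseteq\mathcal V\times\mathcal V$, and $W\in\mathbb{R}^{\mathcal V\times\mathcal V}$ has zero diagonal and satisfies $W_{ij}\neq0$ iff $(i,j)\in\mathcal E$ (weights may have either sign). It is unsigned if $W_{ij}\ge0$ for all $i,j$. The SNC game with binary actions on $\mathcal G$ with external field $h\in\mathbb{R}^{\mathcal V}$ has player set $\mathcal V$, action set $\{-1,+1\}$ for each player, strategy profiles $\mathcal X=\{\pm1\}^{\mathcal V}$, and utilities $u_i(x)=h_ix_i+x_i\sum_{j\in\mathcal V}W_{ij}x_j$. A game with binary actions $\{\pm1\}$ is super-modular if $u_i(+1,x_{-i})-u_i(-1,x_{-i})\le u_i(+1,y_{-i})-u_i(-1,y_{-i})$ for every player $i$ and all profiles $x\le y$ (entrywise). Best responses $\mathcal B_i(x_{-i})=\arg\max_{x_i\in\{\pm1\}}u_i(x_i,x_{-i})$; Nash equilibrium: $x^*_i\in\mathcal B_i(x^*_{-i})$ for all $i$. A BR-path of length $l\ge0$ from $x$ to $y$ is a sequence $x^{(0)}=x,\dots,x^{(l)}=y$ such that for each $k$ some player $i_k$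 has $x^{(k)}_{-i_k}=x^{(k-1)}_{-i_k}$ and $x^{(k)}_{i_k}\in\mathcal B_{i_k}(x^{(k-1)}_{-i_k})\setminus\{x^{(k-1)}_{i_k}\}$. A set $\mathcal X^*\subseteq\mathcal X$ is globally BR-reachable if from every profile there is a BR-path to some element of $\mathcal X^*$. *)

theory Defs
  imports "HOL-Analysis.Analysis"
begin

definition network :: "'v set \<Rightarrow> ('v \<times> 'v) set \<Rightarrow> ('v \<Rightarrow> 'v \<Rightarrow> real) \<Rightarrow> bool" where
  "network V E W \<longleftrightarrow> finite V \<and> V \<noteq> {} \<and> E \<subseteq> V \<times> V
     \<and> (\<forall>i j. i \<notin> V \<or> j \<notin> V \<longrightarrow> W i j = 0)
     \<and> (\<forall>i\<in>V. W i i = 0)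
     \<and> (\<forall>i\<in>V. \<forall>j\<in>V. W i j \<noteq> 0 \<longleftrightarrow> (i, j) \<in> E)"

definition unsigned :: "'v set \<Rightarrow> ('v \<Rightarrow> 'v \<Rightarrow> real) \<Rightarrow> bool" where
  "unsigned V W \<longleftrightarrow> (\<forall>i\<in>V. \<forall>j\<in>V. W i j \<ge> 0)"

definition profiles :: "'v set \<Rightarrow> ('v \<Rightarrow> real) set" where
  "profiles V = {x. (\<forall>i\<in>V. x i = -1 \<or> x i = 1) \<and> (\<forall>i. i \<notin> V \<longrightarrow> x i = 0)}"

definition util :: "'v set \<Rightarrow> ('v \<Rightarrow> 'v \<Rightarrow> real) \<Rightarrow> ('v \<Rightarrow> real) \<Rightarrow> 'v \<Rightarrow> ('v \<Rightarrow> real) \<Rightarrow> real" where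
  "util V W h i x = h i * x i + x i * (\<Sum>j\<in>V. W i j * x j)"

definition supermodular :: "'v set \<Rightarrow> ('v \<Rightarrow> 'v \<Rightarrow> real) \<Rightarrow> ('v \<Rightarrow> real) \<Rightarrow> bool" where
  "supermodular V W h \<longleftrightarrow>
     (\<forall>i\<in>V. \<forall>x\<in>profiles V. \<forall>y\<in>profiles V. (\<forall>k\<in>V. x k \<le> y k) \<longrightarrow>
        util V W h i (x(i := 1)) - util V W h i (x(i := -1))
          \<le> util V W h i (y(i := 1)) - util V W h i (y(i := -1)))"

definition best_resp :: "'v set \<Rightarrow> ('v \<Rightarrow> 'v \<Rightarrow> real) \<Rightarrow> ('v \<Rightarrow> real) \<Rightarrow> 'v \<Rightarrow> ('v \<Rightarrow> real) \<Rightarrow> real set" where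
  "best_resp V W h i x = {a \<in> {-1, 1}. \<forall>b\<in>{-1, 1}. util V W h i (x(i := b)) \<le> util V W h i (x(i := a))}"

definition nash :: "'v set \<Rightarrow> ('v \<Rightarrow> 'v \<Rightarrow> real) \<Rightarrow> ('v \<Rightarrow> real) \<Rightarrow> ('v \<Rightarrow> real) set" where
  "nash V W h = {x \<in> profiles V. \<forall>i\<in>V. x i \<in> best_resp V W h i x}"

definition br_step :: "'v set \<Rightarrow> ('v \<Rightarrow> 'v \<Rightarrow> real) \<Rightarrow> ('v \<Rightarrow> real) \<Rightarrow> ('v \<Rightarrow> real) \<Rightarrow> ('v \<Rightarrow> real) \<Rightarrow> bool" where
  "br_step V W h x y \<longleftrightarrow> (\<exists>i\<in>V. (\<forall>k. k \<noteq> i \<longrightarrow> y k = x k)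
       \<and> y i \<in> best_resp V W h i x \<and> y i \<noteq> x i)"

definition br_path :: "'v set \<Rightarrow> ('v \<Rightarrow> 'v \<Rightarrow> real) \<Rightarrow> ('v \<Rightarrow> real) \<Rightarrow> ('v \<Rightarrow> real) list \<Rightarrow> bool" where
  "br_path V W h p \<longleftrightarrow> p \<noteq> [] \<and> (\<forall>k < length p - 1. br_step V W h (p ! k) (p ! Suc k))"

definition globally_BR_reachable :: "'v set \<Rightarrow> ('v \<Rightarrow> 'v \<Rightarrow> real) \<Rightarrow> ('v \<Rightarrow> real) \<Rightarrow> ('v \<Rightarrow> real) set \<Rightarrow> bool" where
  "globally_BR_reachable V W h S \<longleftrightarrow>
     (\<forall>x\<in>profiles V. \<exists>p. br_path V W h p \<and> hd p = x \<and> last p \<in> S)"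

end

theory Submission
  imports Defs
begin

definition D :: "'v set \<Rightarrow> ('v \<Rightarrow> 'v \<Rightarrow> real) \<Rightarrow> ('v \<Rightarrow> real) \<Rightarrow> ('v \<Rightarrow> real) \<Rightarrow> 'v \<Rightarrow> real" where
  "D V W h x i = h i + (\<Sum>j\<in>V. W i j * x j)"

lemma D_upd:
  assumes "network V E W" "i \<in> V"
  shows "D V W h (x(i := b)) i = D V W h x i"
proof -
  have "W i i = 0" using assms unfolding network_def by auto
  then have "(\<Sum>j\<in>V. W i j * (x(i := b)) j) = (\<Sum>j\<in>V. W i j * x j)"
    by (intro sum.cong) auto
  then show ?thesis unfolding D_def by simp
qed

lemma util_upd:
  assumes "network V E W" "i \<in> V"
  shows "util V W h i (x(i := b)) = b * D V W h x i"
proof -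
  have "util V W h i (x(i := b)) = b * D V W h (x(i := b)) i"
    unfolding util_def D_def by (simp add: algebra_simps)
  then show ?thesis using D_upd[OF assms] by simp
qed

lemma best_resp_char:
  assumes "network V E W" "i \<in> V"
  shows "best_resp V W h i x = {a \<in> {-1, 1}. (a = 1 \<longrightarrow> D V W h x i \<ge> 0) \<and> (a = -1 \<longrightarrow> D V W h x i \<le> 0)}"
  unfolding best_resp_def util_upd[OF assms] by auto

lemma D_mono:
  assumes "unsigned V W" "k \<in> V" "\<forall>j\<in>V. x j \<le> y j"
  shows "D V W h x k \<le> D V W h y k"
  unfolding D_def using assms unfolding unsigned_def
  by (auto intro!: sum_mono mult_left_mono)

lemma profiles_upd:
  assumes "x \<in> profiles V" "i \<in> V" "b = 1 \<or> b = -1"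
  shows "x(i := b) \<in> profiles V"
  using assms unfolding profiles_def by auto

lemma path_prepend:
  assumes "br_step V W h x y" "br_path V W h p" "hd p = y"
  shows "br_path V W h (x # p) \<and> hd (x # p) = x \<and> last (x # p) = last p"
proof -
  obtain q where p: "p = y # q" using assms(2,3) unfolding br_path_def by (cases p) auto
  have "\<forall>k < length (x # p) - 1. br_step V W h ((x # p) ! k) ((x # p) ! Suc k)"
  proof (intro allI impI)
    fix k assume k: "k < length (x # p) - 1"
    show "br_step V W h ((x # p) ! k) ((x # p) ! Suc k)"
    proof (cases k)
      case 0 then show ?thesis using assms(1) p by simp
    next
      case (Suc k') then show ?thesis using assms(2) k unfolding br_path_def by auto
    qed
  qed
  then show ?thesis using p unfolding br_path_def by simp
qed

lemma phase2:
  assumes net: "network V E W" and us: "unsigned V W"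
  shows "\<forall>x\<in>profiles V. card {i\<in>V. x i = -1} = n \<longrightarrow>
     (\<forall>i\<in>V. x i = 1 \<longrightarrow> D V W h x i \<ge> 0) \<longrightarrow>
     (\<exists>p. br_path V W h p \<and> hd p = x \<and> last p \<in> nash V W h)"
proof (induction n rule: less_induct)
  case (less n)
  show ?case
  proof (intro ballI impI)
    fix x assume x: "x \<in> profiles V" and cn: "card {i\<in>V. x i = -1} = n"
      and P: "\<forall>i\<in>V. x i = 1 \<longrightarrow> D V W h x i \<ge> 0"
    have fin: "finite V" using net unfolding network_def by auto
    show "\<exists>p. br_path V W h p \<and> hd p = x \<and> last p \<in> nash V W h"
    proof (cases "x \<in> nash V W h")
      case True
      then show ?thesis by (intro exI[of _ "[x]"]) (simp add: br_path_def)
    next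
      case False
      then obtain i where i: "i \<in> V" "x i \<notin> best_resp V W h i x"
        using x unfolding nash_def by auto
      have br: "x i \<notin> {a \<in> {-1, 1}. (a = 1 \<longrightarrow> D V W h x i \<ge> 0) \<and> (a = -1 \<longrightarrow> D V W h x i \<le> 0)}"
        using i(2) unfolding best_resp_char[OF net i(1)] .
      have "x i = -1 \<or> x i = 1" using x i(1) unfolding profiles_def by blast
      then have xi1: "x i = -1" using br P i(1) by auto
      then have xi: "x i = -1" "D V W h x i > 0" using br by auto
      define y where "y = x(i := 1)"
      have y: "y \<in> profiles V" unfolding y_def using profiles_upd[OF x i(1)] by simp
      have step: "br_step V W h x y"
        unfolding br_step_def y_def using i(1) xi by (auto simp: best_resp_char[OF net i(1)])
      have sub: "{k\<in>V. y k = -1} \<subset> {k\<in>V. x k = -1}" using i(1) xi unfolding y_def by auto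
      have lt: "card {k\<in>V. y k = -1} < n" using psubset_card_mono[OF _ sub] fin cn by auto
      have le: "\<forall>j\<in>V. x j \<le> y j" unfolding y_def using xi by auto
      have Py: "\<forall>k\<in>V. y k = 1 \<longrightarrow> D V W h y k \<ge> 0"
      proof (intro ballI impI)
        fix k assume k: "k \<in> V" "y k = 1"
        show "D V W h y k \<ge> 0"
        proof (cases "k = i")
          case True
          then show ?thesis using D_upd[OF net i(1), of h x 1] xi unfolding y_def by simp
        next
          case False
          then have "x k = 1" using k unfolding y_def by simp
          then show ?thesis using P k D_mono[OF us k(1) le, of h] by force
        qed
      qed
      obtain p where p: "br_path V W h p" "hd p = y" "last p \<in> nash V W h"
        using less[rule_format, OF lt y refl Py[rule_format]] by blast
      show ?thesis using path_prepend[OF step p(1,2)] p(3) by metis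
    qed
  qed
qed

lemma phase1:
  assumes net: "network V E W" and us: "unsigned V W"
  shows "\<forall>x\<in>profiles V. card {i\<in>V. x i = 1} = n \<longrightarrow>
     (\<exists>p. br_path V W h p \<and> hd p = x \<and> last p \<in> nash V W h)"
proof (induction n rule: less_induct)
  case (less n)
  show ?case
  proof (intro ballI impI)
    fix x assume x: "x \<in> profiles V" and cn: "card {i\<in>V. x i = 1} = n"
    have fin: "finite V" using net unfolding network_def by auto
    show "\<exists>p. br_path V W h p \<and> hd p = x \<and> last p \<in> nash V W h"
    proof (cases "\<forall>i\<in>V. x i = 1 \<longrightarrow> D V W h x i \<ge> 0")
      case True
      then show ?thesis using phase2[OF net us] x by blast
    next
      case False
      then obtain i where i: "i \<in> V" "x i = 1" "D V W h x i < 0" by force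
      define y where "y = x(i := -1)"
      have y: "y \<in> profiles V" unfolding y_def using profiles_upd[OF x i(1)] by simp
      have step: "br_step V W h x y"
        unfolding br_step_def y_def using i by (auto simp: best_resp_char[OF net i(1)])
      have sub: "{k\<in>V. y k = 1} \<subset> {k\<in>V. x k = 1}" using i unfolding y_def by auto
      have lt: "card {k\<in>V. y k = 1} < n" using psubset_card_mono[OF _ sub] fin cn by auto
      obtain p where p: "br_path V W h p" "hd p = y" "last p \<in> nash V W h"
        using less[rule_format, OF lt y refl] by blast
      show ?thesis using path_prepend[OF step p(1,2)] p(3) by metis
    qed
  qed
qed

lemma diff_util:
  assumes "network V E W" "i \<in> V"
  shows "util V W h i (x(i := 1)) - util V W h i (x(i := -1)) = 2 * D V W h x i"
  using util_upd[OF assms] by simp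

theorem proposition2:
  fixes V :: "'v set" and E :: "('v \<times> 'v) set" and W :: "'v \<Rightarrow> 'v \<Rightarrow> real" and h :: "'v \<Rightarrow> real"
  assumes "network V E W"
  shows "(supermodular V W h \<longleftrightarrow> unsigned V W)
    \<and> (unsigned V W \<longrightarrow> globally_BR_reachable V W h (nash V W h))"
proof (intro conjI impI)
  note net = assms
  show "supermodular V W h \<longleftrightarrow> unsigned V W"
  proof
    assume sm: "supermodular V W h"
    show "unsigned V W" unfolding unsigned_def
    proof (intro ballI, rule ccontr)
      fix i j assume ij: "i \<in> V" "j \<in> V" "\<not> 0 \<le> W i j"
      have "i \<noteq> j" using ij net unfolding network_def by auto
      define x :: "'v \<Rightarrow> real" where "x = (\<lambda>k. if k \<in> V then -1 else 0)"
      define y where "y = x(j := 1)"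
      have x: "x \<in> profiles V" unfolding x_def profiles_def by auto
      have y: "y \<in> profiles V" unfolding y_def using profiles_upd[OF x ij(2)] by simp
      have le: "\<forall>k\<in>V. x k \<le> y k" unfolding y_def x_def by auto
      have "2 * D V W h x i \<le> 2 * D V W h y i"
        using sm[unfolded supermodular_def, rule_format, OF ij(1) x y le[rule_format]]
        unfolding diff_util[OF net ij(1)] .
      moreover have "D V W h y i = D V W h x i + 2 * W i j"
      proof -
        have "(\<Sum>k\<in>V. W i k * y k) = (\<Sum>k\<in>V. W i k * x k + (if k = j then 2 * W i j else 0))"
          unfolding y_def x_def using ij by (intro sum.cong) auto
        also have "\<dots> = (\<Sum>k\<in>V. W i k * x k) + 2 * W i j"
          using ij(2) net unfolding network_def by (simp add: sum.distrib)
        finally show ?thesis unfolding D_def by simp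
      qed
      ultimately show False using ij by simp
    qed
  next
    assume us: "unsigned V W"
    show "supermodular V W h" unfolding supermodular_def
    proof (intro ballI impI)
      fix i x y assume i: "i \<in> V" and "x \<in> profiles V" "y \<in> profiles V" and le: "\<forall>k\<in>V. x k \<le> y k"
      show "util V W h i (x(i := 1)) - util V W h i (x(i := -1))
          \<le> util V W h i (y(i := 1)) - util V W h i (y(i := -1))"
        unfolding diff_util[OF net i] using D_mono[OF us i le, of h] by simp
    qed
  qed
next
  assume us: "unsigned V W"
  show "globally_BR_reachable V W h (nash V W h)"
    unfolding globally_BR_reachable_def using phase1[OF assms us] by blast
qed

end
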